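(* Let $K \subset L$ be fields and let $D: L \to L$ be a derivation (an additive map satisfying $D(ab) = aD(b) + D(a)b$) such that $\ker D = K$. Then the map \[ L \otimes_K \ker D^1 \longrightarrow \Omega_{L/K}, \qquad f \otimes \omega \mapsto f\omega, \] is injective.
   Context: $\Omega_{L/K}$ is the $L$-vector space of Kähler differentials of $L$ over $K$, with universal $K$-derivation $d: L \to \Omega_{L/K}$. Since $D(K)=0$, there is a unique $K$-linear map $D^1: \Omega_{L/K} \to \Omega_{L/K}$ with $D^1(f\, dg) = (Df)\, dg + f\, d(Dg)$ for all $f, g \in L$; $\ker D^1$ is a $K$-subspace of $\Omega_{L/K}$. *)

theory Defs
  imports Main
begin

text \<open>Concrete construction of the Kaehler differentials of L over K (L a field type 'a,
K a subset): the free L-module on symbols dg (g in L), represented by finitely supported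
functions 'a \<Rightarrow> 'a (omega g = coefficient of dg), modulo the L-submodule generated by
d(a+b) - da - db, d(ab) - a db - b da, and dc for c in K.\<close>

definition fsupp :: "('b \<Rightarrow> 'c::zero) \<Rightarrow> bool" where
  "fsupp f \<longleftrightarrow> finite {x. f x \<noteq> 0}"

definition dsym :: "'a \<Rightarrow> ('a \<Rightarrow> 'a::field)" where
  "dsym g = (\<lambda>x. if x = g then 1 else 0)"

inductive_set kd_rel :: "'a::field set \<Rightarrow> ('a \<Rightarrow> 'a) set" for K :: "'a set" where
  zero: "(\<lambda>t. 0) \<in> kd_rel K"
| add: "x \<in> kd_rel K \<Longrightarrow> y \<in> kd_rel K \<Longrightarrow> (\<lambda>t. x t + y t) \<in> kd_rel K"
| smult: "x \<in> kd_rel K \<Longrightarrow> (\<lambda>t. c * x t) \<in> kd_rel K"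
| additive: "(\<lambda>t. dsym (a + b) t - dsym a t - dsym b t) \<in> kd_rel K"
| leibniz: "(\<lambda>t. dsym (a * b) t - a * dsym b t - b * dsym a t) \<in> kd_rel K"
| const: "c \<in> K \<Longrightarrow> dsym c \<in> kd_rel K"

definition omega_eq :: "'a::field set \<Rightarrow> ('a \<Rightarrow> 'a) \<Rightarrow> ('a \<Rightarrow> 'a) \<Rightarrow> bool" where
  "omega_eq K \<omega> \<eta> \<longleftrightarrow> (\<lambda>t. \<omega> t - \<eta> t) \<in> kd_rel K"

definition D1 :: "('a::field \<Rightarrow> 'a) \<Rightarrow> ('a \<Rightarrow> 'a) \<Rightarrow> ('a \<Rightarrow> 'a)" where
  "D1 D \<omega> = (\<lambda>x. \<Sum>g\<in>{g. \<omega> g \<noteq> 0}. D (\<omega> g) * dsym g x + \<omega> g * dsym (D g) x)"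

definition kerD1 :: "('a::field \<Rightarrow> 'a) \<Rightarrow> 'a set \<Rightarrow> ('a \<Rightarrow> 'a) set" where
  "kerD1 D K = {\<omega>. fsupp \<omega> \<and> D1 D \<omega> \<in> kd_rel K}"

text \<open>Tensor product L \<otimes>_K ker D^1: the free abelian group on pairs (f, omega) with
omega a representative in ker D^1, modulo the subgroup generated by bi-additivity,
K-balancedness, and identification of representatives equal in Omega.\<close>

definition tdelta :: "'p \<Rightarrow> ('p \<Rightarrow> int)" where
  "tdelta p = (\<lambda>q. if q = p then 1 else 0)"

inductive_set tens_rel :: "'a::field set \<Rightarrow> ('a \<Rightarrow> 'a) \<Rightarrow> (('a \<times> ('a \<Rightarrow> 'a)) \<Rightarrow> int) set"
  for K :: "'a set" and D :: "'a \<Rightarrow> 'a" where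
  zero: "(\<lambda>p. 0) \<in> tens_rel K D"
| add: "x \<in> tens_rel K D \<Longrightarrow> y \<in> tens_rel K D \<Longrightarrow> (\<lambda>p. x p + y p) \<in> tens_rel K D"
| neg: "x \<in> tens_rel K D \<Longrightarrow> (\<lambda>p. - x p) \<in> tens_rel K D"
| add_left: "\<omega> \<in> kerD1 D K \<Longrightarrow>
     (\<lambda>p. tdelta (f + f', \<omega>) p - tdelta (f, \<omega>) p - tdelta (f', \<omega>) p) \<in> tens_rel K D"
| add_right: "\<omega> \<in> kerD1 D K \<Longrightarrow> \<omega>' \<in> kerD1 D K \<Longrightarrow>
     (\<lambda>p. tdelta (f, \<lambda>t. \<omega> t + \<omega>' t) p - tdelta (f, \<omega>) p - tdelta (f, \<omega>') p) \<in> tens_rel K D"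
| balanced: "\<omega> \<in> kerD1 D K \<Longrightarrow> c \<in> K \<Longrightarrow>
     (\<lambda>p. tdelta (c * f, \<omega>) p - tdelta (f, \<lambda>t. c * \<omega> t) p) \<in> tens_rel K D"
| rep: "\<omega> \<in> kerD1 D K \<Longrightarrow> \<omega>' \<in> kerD1 D K \<Longrightarrow> omega_eq K \<omega> \<omega>' \<Longrightarrow>
     (\<lambda>p. tdelta (f, \<omega>) p - tdelta (f, \<omega>') p) \<in> tens_rel K D"

definition tensor_elem :: "'a::field set \<Rightarrow> ('a \<Rightarrow> 'a) \<Rightarrow> (('a \<times> ('a \<Rightarrow> 'a)) \<Rightarrow> int) \<Rightarrow> bool" where
  "tensor_elem K D \<xi> \<longleftrightarrow> finite {p. \<xi> p \<noteq> 0} \<and> (\<forall>p. \<xi> p \<noteq> 0 \<longrightarrow> snd p \<in> kerD1 D K)"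

definition mult_map :: "(('a::field \<times> ('a \<Rightarrow> 'a)) \<Rightarrow> int) \<Rightarrow> ('a \<Rightarrow> 'a)" where
  "mult_map \<xi> = (\<lambda>t. \<Sum>p\<in>{p. \<xi> p \<noteq> 0}. of_int (\<xi> p) * fst p * snd p t)"

end

theory Submission
  imports Defs
begin

definition lin :: "'i set \<Rightarrow> ('i \<Rightarrow> 'a::field) \<Rightarrow> ('i \<Rightarrow> 'a \<Rightarrow> 'a) \<Rightarrow> 'a \<Rightarrow> 'a" where
  "lin I f w = (\<lambda>t. \<Sum>i\<in>I. f i * w i t)"

definition tsum :: "'i set \<Rightarrow> ('i \<Rightarrow> 'a::field) \<Rightarrow> ('i \<Rightarrow> 'a \<Rightarrow> 'a) \<Rightarrow> ('a \<times> ('a \<Rightarrow> 'a) \<Rightarrow> int)" where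
  "tsum I f w = (\<lambda>p. \<Sum>i\<in>I. tdelta (f i, w i) p)"

lemma kd_add: "x \<in> kd_rel K \<Longrightarrow> y \<in> kd_rel K \<Longrightarrow> (\<lambda>t. x t + y t) \<in> kd_rel K"
  by (rule kd_rel.add)
lemma kd_smult: "x \<in> kd_rel K \<Longrightarrow> (\<lambda>t. c * x t) \<in> kd_rel K"
  by (rule kd_rel.smult)
lemma kd_neg: "x \<in> kd_rel K \<Longrightarrow> (\<lambda>t. - x t) \<in> kd_rel K"
  using kd_rel.smult[of x K "-1"] by simp
lemma kd_diff: "x \<in> kd_rel K \<Longrightarrow> y \<in> kd_rel K \<Longrightarrow> (\<lambda>t. x t - y t) \<in> kd_rel K"
  using kd_add[OF _ kd_neg, of x K y] by simp
lemma kd_cong: "x \<in> kd_rel K \<Longrightarrow> (\<And>t. x t = y t) \<Longrightarrow> y \<in> kd_rel K"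
proof -
  assume "x \<in> kd_rel K" "\<And>t. x t = y t"
  then have "x = y" by auto
  with \<open>x \<in> kd_rel K\<close> show ?thesis by simp
qed
lemma kd_zero: "(\<lambda>t. 0) \<in> kd_rel K" by (rule kd_rel.zero)

lemma kd_sum: "(\<And>i. i \<in> I \<Longrightarrow> x i \<in> kd_rel K) \<Longrightarrow> (\<lambda>t. \<Sum>i\<in>I. x i t) \<in> kd_rel K"
proof (induction I rule: infinite_finite_induct)
  case (infinite A) then show ?case by (simp add: kd_zero)
next
  case empty then show ?case by (simp add: kd_zero)
next
  case (insert a A)
  then show ?case by (simp add: kd_add)
qed

lemma kd_lin: "(\<And>i. i \<in> I \<Longrightarrow> w i \<in> kd_rel K) \<Longrightarrow> lin I f w \<in> kd_rel K"
  unfolding lin_def by (rule kd_sum) (simp add: kd_smult)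

lemma kd_fsupp: "x \<in> kd_rel K \<Longrightarrow> fsupp x"
proof (induction rule: kd_rel.induct)
  case zero then show ?case by (simp add: fsupp_def)
next
  case (add x y)
  then show ?case unfolding fsupp_def
    by (rule_tac finite_subset[of _ "{t. x t \<noteq> 0} \<union> {t. y t \<noteq> 0}"]) auto
next
  case (smult x c)
  then show ?case unfolding fsupp_def
    by (rule_tac finite_subset[of _ "{t. x t \<noteq> 0}"]) auto
next
  case (additive a b)
  then show ?case unfolding fsupp_def
    by (rule_tac finite_subset[of _ "{a+b,a,b}"]) (auto simp: dsym_def)
next
  case (leibniz a b)
  then show ?case unfolding fsupp_def
    by (rule_tac finite_subset[of _ "{a*b,a,b}"]) (auto simp: dsym_def)
next
  case (const c)
  then show ?case unfolding fsupp_def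
    by (rule_tac finite_subset[of _ "{c}"]) (auto simp: dsym_def)
qed

lemma t_add: "x \<in> tens_rel K D \<Longrightarrow> y \<in> tens_rel K D \<Longrightarrow> (\<lambda>t. x t + y t) \<in> tens_rel K D"
  by (rule tens_rel.add)
lemma t_neg: "x \<in> tens_rel K D \<Longrightarrow> (\<lambda>t. - x t) \<in> tens_rel K D"
  by (rule tens_rel.neg)
lemma t_diff: "x \<in> tens_rel K D \<Longrightarrow> y \<in> tens_rel K D \<Longrightarrow> (\<lambda>t. x t - y t) \<in> tens_rel K D"
  using t_add[OF _ t_neg, of x K D y] by simp
lemma t_cong: "x \<in> tens_rel K D \<Longrightarrow> (\<And>t. x t = y t) \<Longrightarrow> y \<in> tens_rel K D"
proof -
  assume "x \<in> tens_rel K D" "\<And>t. x t = y t"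
  then have "x = y" by auto
  with \<open>x \<in> tens_rel K D\<close> show ?thesis by simp
qed
lemma t_zero: "(\<lambda>t. 0) \<in> tens_rel K D" by (rule tens_rel.zero)

lemma t_sum: "(\<And>i. i \<in> I \<Longrightarrow> x i \<in> tens_rel K D) \<Longrightarrow> (\<lambda>t. \<Sum>i\<in>I. x i t) \<in> tens_rel K D"
proof (induction I rule: infinite_finite_induct)
  case (infinite A) then show ?case by (simp add: t_zero)
next
  case empty then show ?case by (simp add: t_zero)
next
  case (insert a A)
  then show ?case by (simp add: t_add)
qed

lemma t_zero_left: "\<omega> \<in> kerD1 D K \<Longrightarrow> tdelta (0, \<omega>) \<in> tens_rel K D"
  using t_neg[OF tens_rel.add_left[of \<omega> D K 0 0]] by simp

lemma fsupp_add: "fsupp (x::'a::field\<Rightarrow>'a) \<Longrightarrow> fsupp y \<Longrightarrow> fsupp (\<lambda>t. x t + y t)"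
  unfolding fsupp_def
  by (rule finite_subset[of _ "{t. x t \<noteq> 0} \<union> {t. y t \<noteq> 0}"]) auto
lemma fsupp_smult: "fsupp (x::'a::field\<Rightarrow>'a) \<Longrightarrow> fsupp (\<lambda>t. c * x t)"
  unfolding fsupp_def
  by (rule finite_subset[of _ "{t. x t \<noteq> 0}"]) auto
lemma fsupp_dsym: "fsupp (dsym a)"
  unfolding fsupp_def
  by (rule finite_subset[of _ "{a}"]) (auto simp: dsym_def)
lemma fsupp_sum: "(\<And>i. i \<in> I \<Longrightarrow> fsupp (x i :: 'a::field \<Rightarrow> 'a)) \<Longrightarrow> fsupp (\<lambda>t. \<Sum>i\<in>I. x i t)"
proof (induction I rule: infinite_finite_induct)
  case (infinite A) then show ?case by (simp add: fsupp_def)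
next
  case empty then show ?case by (simp add: fsupp_def)
next
  case (insert a A)
  then show ?case using fsupp_add[of "x a" "\<lambda>t. \<Sum>i\<in>A. x i t"] by simp
qed
lemma fsupp_lin: "(\<And>i. i \<in> I \<Longrightarrow> fsupp (w i)) \<Longrightarrow> fsupp (lin I f w)"
  unfolding lin_def by (rule fsupp_sum) (simp add: fsupp_smult)


locale der =
  fixes K :: "'a::field set" and D :: "'a \<Rightarrow> 'a"
  assumes D_add: "\<And>a b. D (a + b) = D a + D b"
    and D_mult: "\<And>a b. D (a * b) = a * D b + D a * b"
    and ker_D: "{x. D x = 0} = K"
begin

lemma inK: "c \<in> K \<longleftrightarrow> D c = 0" using ker_D by auto
lemma D0[simp]: "D 0 = 0" using D_add[of 0 0] by (metis add.right_neutral add_left_cancel)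
lemma D1c[simp]: "D 1 = 0" using D_mult[of 1 1] by (metis add.right_neutral add_left_cancel mult_1_left mult_1_right)
lemma D_neg: "D (- a) = - D a" using D_add[of a "-a"] by (simp add: add_eq_0_iff2 add.commute)
lemma D_diff: "D (a - b) = D a - D b" using D_add[of a "-b"] by (simp add: D_neg)
lemma D_sum: "D (\<Sum>i\<in>I. f i) = (\<Sum>i\<in>I. D (f i))"
  by (induction I rule: infinite_finite_induct) (auto simp: D_add)
lemma D_dsym[simp]: "D (dsym a x) = 0" by (simp add: dsym_def)
lemma D_quot: "D x = 0 \<Longrightarrow> D y = 0 \<Longrightarrow> y \<noteq> 0 \<Longrightarrow> D (x / y) = 0"
  using D_mult[of "x/y" y] by simp

lemma D1_eq:
  assumes "finite S" "{g. w g \<noteq> 0} \<subseteq> S"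
  shows "D1 D w = (\<lambda>x. D (w x) + (\<Sum>g\<in>S. w g * dsym (D g) x))"
proof
  fix x
  let ?A = "{g. w g \<noteq> 0}"
  have fA: "finite ?A" using assms finite_subset by blast
  have 1: "(\<Sum>g\<in>?A. D (w g) * dsym g x) = D (w x)"
  proof -
    have "(\<Sum>g\<in>?A. D (w g) * dsym g x) = (\<Sum>g\<in>?A. if x = g then D (w g) else 0)"
      by (rule sum.cong) (auto simp: dsym_def)
    also have "\<dots> = (if x \<in> ?A then D (w x) else 0)"
      using fA by (simp add: sum.delta)
    also have "\<dots> = D (w x)" by auto
    finally show ?thesis .
  qed
  have 2: "(\<Sum>g\<in>?A. w g * dsym (D g) x) = (\<Sum>g\<in>S. w g * dsym (D g) x)"
    by (rule sum.mono_neutral_left) (use assms in auto)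
  show "D1 D w x = D (w x) + (\<Sum>g\<in>S. w g * dsym (D g) x)"
    unfolding D1_def using 1 2 by (simp add: sum.distrib)
qed

lemma fsupp_sub: "fsupp w \<Longrightarrow> {g. w g \<noteq> 0} \<subseteq> {g. w g \<noteq> 0}" by simp

lemma D1_add:
  assumes "fsupp x" "fsupp y"
  shows "D1 D (\<lambda>t. x t + y t) = (\<lambda>s. D1 D x s + D1 D y s)"
proof -
  let ?S = "{g. x g \<noteq> 0} \<union> {g. y g \<noteq> 0}"
  have f: "finite ?S" using assms by (simp add: fsupp_def)
  show ?thesis
    apply (subst D1_eq[OF f], force)
    apply (subst D1_eq[OF f, of x], force)
    apply (subst D1_eq[OF f, of y], force)
    by (simp add: D_add sum.distrib algebra_simps)
qed

lemma D1_smult: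
  assumes "fsupp x"
  shows "D1 D (\<lambda>t. c * x t) = (\<lambda>s. D c * x s + c * D1 D x s)"
proof -
  let ?S = "{g. x g \<noteq> 0}"
  have f: "finite ?S" using assms by (simp add: fsupp_def)
  show ?thesis
    apply (subst D1_eq[OF f], force)
    apply (subst D1_eq[OF f, of x], force)
    by (simp add: D_mult sum_distrib_left algebra_simps)
qed

lemma D1_dsym: "D1 D (dsym a) = dsym (D a)"
proof -
  have f: "finite {a}" by simp
  show ?thesis
    using D1_eq[OF f, of "dsym a"] by (auto simp: dsym_def)
qed

lemma D1_zero: "D1 D (\<lambda>t. 0) = (\<lambda>t. 0)"
  by (simp add: D1_def)

lemma D1_sum: "(\<And>i. i \<in> I \<Longrightarrow> fsupp (x i)) \<Longrightarrow> D1 D (\<lambda>t. \<Sum>i\<in>I. x i t) = (\<lambda>s. \<Sum>i\<in>I. D1 D (x i) s)"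
proof (induction I rule: infinite_finite_induct)
  case (infinite A) then show ?case by (simp add: D1_zero)
next
  case empty then show ?case by (simp add: D1_zero)
next
  case (insert a A)
  then show ?case using D1_add[of "x a" "\<lambda>t. \<Sum>i\<in>A. x i t"] fsupp_sum[of A x] by simp
qed

lemma D1_lin:
  assumes "\<And>i. i \<in> I \<Longrightarrow> fsupp (w i)"
  shows "D1 D (lin I f w) = (\<lambda>x. lin I (\<lambda>i. D (f i)) w x + lin I f (\<lambda>i. D1 D (w i)) x)"
  unfolding lin_def
  apply (subst D1_sum)
   apply (simp add: fsupp_smult assms)
  apply (rule ext)
  by (simp add: D1_smult assms sum.distrib)

lemma D1_kd: "x \<in> kd_rel K \<Longrightarrow> D1 D x \<in> kd_rel K"
proof (induction rule: kd_rel.induct)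
  case zero then show ?case by (simp add: D1_zero kd_zero)
next
  case (add x y)
  then show ?case by (simp add: D1_add kd_fsupp kd_add)
next
  case (smult x c)
  then show ?case by (simp add: D1_smult kd_fsupp kd_add kd_smult)
next
  case (additive a b)
  have e: "(\<lambda>t. dsym (a + b) t - dsym a t - dsym b t) = (\<lambda>t. dsym (a + b) t + ((-1) * dsym a t + (-1) * dsym b t))"
    by auto
  show ?case unfolding e
    apply (simp only: D1_add D1_smult fsupp_dsym fsupp_add fsupp_smult D1_dsym)
    by (rule kd_cong[OF kd_rel.additive[where K=K and a="D a" and b="D b"]]) (simp add: D_add D_neg)
next
  case (leibniz a b)
  have e: "(\<lambda>t. dsym (a * b) t - a * dsym b t - b * dsym a t) = (\<lambda>t. dsym (a * b) t + ((-a) * dsym b t + (-b) * dsym a t))"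
    by auto
  have k: "(\<lambda>t. (dsym (a * D b + D a * b) t - dsym (a * D b) t - dsym (D a * b) t) +
      ((dsym (a * D b) t - a * dsym (D b) t - D b * dsym a t) + (dsym (D a * b) t - D a * dsym b t - b * dsym (D a) t))) \<in> kd_rel K"
    by (intro kd_add kd_rel.additive kd_rel.leibniz[where a=a and b="D b"] kd_rel.leibniz)
  show ?case unfolding e
    apply (simp only: D1_add D1_smult fsupp_dsym fsupp_add fsupp_smult D1_dsym)
    apply (rule kd_cong[OF k])
    by (simp add: D_mult D_neg algebra_simps)
next
  case (const c)
  then show ?case using kd_rel.const[where c=0 and K=K] ker_D by (auto simp: D1_dsym)
qed

lemma zero_kerD1: "(\<lambda>t. 0) \<in> kerD1 D K"
  by (simp add: kerD1_def fsupp_def D1_zero kd_zero)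

lemma lin_remove: "finite I \<Longrightarrow> j \<in> I \<Longrightarrow> lin I f w t = f j * w j t + lin (I - {j}) f w t"
  unfolding lin_def by (simp add: sum.remove)

lemma lin_cong: "(\<And>i. i \<in> I \<Longrightarrow> f i = g i) \<Longrightarrow> lin I f w = lin I g w"
  unfolding lin_def by (intro ext sum.cong) auto

lemma lin_smult: "lin I (\<lambda>i. a * f i) w = (\<lambda>t. a * lin I f w t)"
  unfolding lin_def by (simp add: sum_distrib_left mult.assoc)

lemma lin_zero: "(\<And>i. i \<in> I \<Longrightarrow> f i = 0) \<Longrightarrow> lin I f w = (\<lambda>t. 0)"
  unfolding lin_def by (intro ext sum.neutral) auto

lemma lin_D:
  assumes "\<And>i. i \<in> I \<Longrightarrow> w i \<in> kerD1 D K" "lin I g w \<in> kd_rel K"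
  shows "lin I (\<lambda>i. D (g i)) w \<in> kd_rel K"
proof -
  have fs: "\<And>i. i \<in> I \<Longrightarrow> fsupp (w i)" using assms(1) by (simp add: kerD1_def)
  have a: "D1 D (lin I g w) \<in> kd_rel K" by (rule D1_kd[OF assms(2)])
  have b: "lin I g (\<lambda>i. D1 D (w i)) \<in> kd_rel K"
    by (rule kd_lin) (use assms(1) in \<open>simp add: kerD1_def\<close>)
  show ?thesis
    using kd_diff[OF a b] by (simp add: D1_lin[OF fs])
qed

lemma lin_kerD1:
  assumes "\<And>i. i \<in> I \<Longrightarrow> w i \<in> kerD1 D K" "\<And>i. i \<in> I \<Longrightarrow> c i \<in> K"
  shows "lin I c w \<in> kerD1 D K"
proof -
  have fs: "\<And>i. i \<in> I \<Longrightarrow> fsupp (w i)" using assms(1) by (simp add: kerD1_def)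
  have z: "lin I (\<lambda>i. D (c i)) w = (\<lambda>t. 0)" by (rule lin_zero) (use assms(2) inK in auto)
  have b: "lin I c (\<lambda>i. D1 D (w i)) \<in> kd_rel K"
    by (rule kd_lin) (use assms(1) in \<open>simp add: kerD1_def\<close>)
  show ?thesis unfolding kerD1_def
    using b fsupp_lin[OF fs] by (simp add: D1_lin[OF fs] z)
qed

lemma indep:
  assumes "finite I" "\<And>i. i \<in> I \<Longrightarrow> w i \<in> kerD1 D K" "lin I f w \<in> kd_rel K" "j0 \<in> I" "f j0 \<noteq> 0"
  shows "\<exists>c. (\<forall>i\<in>I. c i \<in> K) \<and> (\<exists>i\<in>I. c i \<noteq> 0) \<and> lin I c w \<in> kd_rel K"
  using assms
proof (induction "card I" arbitrary: I f j0 rule: less_induct)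
  case less
  define g where "g i = inverse (f j0) * f i" for i
  have lg: "lin I g w \<in> kd_rel K"
    unfolding g_def lin_smult by (rule kd_smult) (rule less.prems(3))
  define h where "h i = D (g i)" for i
  have lh: "lin I h w \<in> kd_rel K" unfolding h_def by (rule lin_D[OF less.prems(2) lg])
  have gj0: "g j0 = 1" using less.prems(5) by (simp add: g_def)
  show ?case
  proof (cases "\<forall>i\<in>I. h i = 0")
    case True
    have "\<forall>i\<in>I. g i \<in> K" using True inK by (auto simp: h_def)
    moreover have "\<exists>i\<in>I. g i \<noteq> 0" using gj0 less.prems(4) by (intro bexI[of _ j0]) auto
    ultimately show ?thesis using lg by blast
  next
    case False
    then obtain j1 where j1: "j1 \<in> I" "h j1 \<noteq> 0" by auto
    have hj0: "h j0 = 0" by (simp add: h_def gj0)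
    let ?J = "I - {j0}"
    have cJ: "card ?J < card I" using less.prems(1,4) by (meson card_Diff1_less)
    have lhJ: "lin ?J h w \<in> kd_rel K"
      using lh lin_remove[OF less.prems(1,4), of h w] hj0 by (simp add: kd_cong)
    have j1J: "j1 \<in> ?J" using j1 hj0 by auto
    obtain c where c: "\<forall>i\<in>?J. c i \<in> K" "\<exists>i\<in>?J. c i \<noteq> 0" "lin ?J c w \<in> kd_rel K"
      using less.hyps[OF cJ _ _ lhJ j1J j1(2)] less.prems(1,2) by auto
    define c' where "c' = c(j0 := 0)"
    have "lin ?J c' w = lin ?J c w" by (rule lin_cong) (simp add: c'_def)
    then have "lin I c' w = lin ?J c w"
      using lin_remove[OF less.prems(1,4), of c' w] by (auto simp: c'_def)
    moreover have "\<forall>i\<in>I. c' i \<in> K" using c(1) inK by (auto simp: c'_def)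
    moreover have "\<exists>i\<in>I. c' i \<noteq> 0" using c(2) by (auto simp: c'_def)
    ultimately show ?thesis using c(3) by metis
  qed
qed

lemma smult_kerD1: "w \<in> kerD1 D K \<Longrightarrow> c \<in> K \<Longrightarrow> (\<lambda>t. c * w t) \<in> kerD1 D K"
  unfolding kerD1_def using inK by (auto simp: fsupp_smult D1_smult kd_smult)

lemma t_right:
  assumes "finite J" "\<And>i. i \<in> J \<Longrightarrow> w i \<in> kerD1 D K" "\<And>i. i \<in> J \<Longrightarrow> a i \<in> K"
  shows "(\<lambda>p. tdelta (F, lin J a w) p - (\<Sum>i\<in>J. tdelta (F, \<lambda>t. a i * w i t) p)) \<in> tens_rel K D"
  using assms
proof (induction J rule: finite_induct)
  case empty
  have "(\<lambda>p. tdelta (F, \<lambda>t. 0 + 0) p - tdelta (F, \<lambda>t. 0) p - tdelta (F, \<lambda>t. 0) p) \<in> tens_rel K D"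
    by (rule tens_rel.add_right) (simp_all add: zero_kerD1)
  then have "(\<lambda>p. - tdelta (F, \<lambda>t. 0) p) \<in> tens_rel K D" by simp
  from t_neg[OF this] show ?case by (simp add: lin_def)
next
  case (insert j J)
  have k1: "(\<lambda>t. a j * w j t) \<in> kerD1 D K" using insert.prems by (simp add: smult_kerD1)
  have k2: "lin J a w \<in> kerD1 D K" using insert.prems by (simp add: lin_kerD1)
  have r: "(\<lambda>p. tdelta (F, \<lambda>t. (\<lambda>t. a j * w j t) t + lin J a w t) p - tdelta (F, \<lambda>t. a j * w j t) p
      - tdelta (F, lin J a w) p) \<in> tens_rel K D"
    by (rule tens_rel.add_right[OF k1 k2])
  have e: "lin (insert j J) a w = (\<lambda>t. (\<lambda>t. a j * w j t) t + lin J a w t)"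
    using insert.hyps by (simp add: lin_def)
  show ?case
    apply (rule t_cong[OF t_add[OF r insert.IH]])
    using insert.prems insert.hyps by (simp_all add: e)
qed

lemma mainlem:
  assumes "finite I" "\<And>i. i \<in> I \<Longrightarrow> w i \<in> kerD1 D K" "lin I f w \<in> kd_rel K"
  shows "tsum I f w \<in> tens_rel K D"
  using assms
proof (induction "card I" arbitrary: I f rule: less_induct)
  case less
  show ?case
  proof (cases "\<forall>i\<in>I. f i = 0")
    case True
    have "(\<lambda>p. \<Sum>i\<in>I. tdelta (0, w i) p) \<in> tens_rel K D"
      by (rule t_sum) (simp add: t_zero_left less.prems(2))
    then show ?thesis unfolding tsum_def using True by (simp add: t_cong)
  next
    case False
    then obtain j0 where j0: "j0 \<in> I" "f j0 \<noteq> 0" by auto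
    obtain c where c: "\<forall>i\<in>I. c i \<in> K" "\<exists>i\<in>I. c i \<noteq> 0" "lin I c w \<in> kd_rel K"
      using indep[OF less.prems j0] by blast
    then obtain j where j: "j \<in> I" "c j \<noteq> 0" by auto
    let ?J = "I - {j}"
    have fJ: "finite ?J" using less.prems(1) by simp
    have cJ: "card ?J < card I" using less.prems(1) j(1) by (meson card_Diff1_less)
    define a where "a i = - c i / c j" for i
    have aK: "a i \<in> K" if "i \<in> ?J" for i
      using c(1) that j inK D_quot[of "- c i" "c j"] by (auto simp: a_def D_neg)
    have wJ: "\<And>i. i \<in> ?J \<Longrightarrow> w i \<in> kerD1 D K" using less.prems(2) by auto
    define om where "om = lin ?J a w"
    have omk: "om \<in> kerD1 D K" unfolding om_def by (rule lin_kerD1[OF wJ aK])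
    have linrem: "\<And>g t. lin I g w t = g j * w j t + lin ?J g w t"
      by (rule lin_remove[OF less.prems(1) j(1)])
    have oeq: "omega_eq K (w j) om"
    proof -
      have "(\<lambda>t. inverse (c j) * lin I c w t) \<in> kd_rel K" by (rule kd_smult[OF c(3)])
      moreover have "inverse (c j) * lin I c w t = w j t - om t" for t
      proof -
        have "lin ?J a w t = inverse (c j) * (- lin ?J c w t)"
          unfolding lin_def a_def by (simp add: sum_distrib_left sum_negf field_simps)
        then show ?thesis unfolding om_def linrem[of c] using j(2)
          by (simp add: field_simps)
      qed
      ultimately show ?thesis unfolding omega_eq_def by (simp add: kd_cong)
    qed
    define f' where "f' i = f i + a i * f j" for i
    have lf': "lin ?J f' w \<in> kd_rel K"
    proof -
      have "(\<lambda>t. lin I f w t - f j * (w j t - om t)) \<in> kd_rel K"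
        using kd_diff[OF less.prems(3) kd_smult[OF oeq[unfolded omega_eq_def]], of "f j"] by simp
      moreover have "lin I f w t - f j * (w j t - om t) = lin ?J f' w t" for t
        unfolding linrem[of f] om_def lin_def f'_def
        using less.prems(1) j(1) by (simp add: sum.distrib sum_distrib_left algebra_simps sum.remove)
      ultimately show ?thesis by (simp add: kd_cong)
    qed
    have IH: "tsum ?J f' w \<in> tens_rel K D"
      by (rule less.hyps[OF cJ fJ wJ lf'])
    have T1: "(\<lambda>p. tdelta (f j, w j) p - tdelta (f j, om) p) \<in> tens_rel K D"
      by (rule tens_rel.rep[OF less.prems(2)[OF j(1)] omk oeq])
    have T2: "(\<lambda>p. tdelta (f j, om) p - (\<Sum>i\<in>?J. tdelta (f j, \<lambda>t. a i * w i t) p)) \<in> tens_rel K D"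
      unfolding om_def by (rule t_right[OF fJ wJ aK])
    have T3: "(\<lambda>p. \<Sum>i\<in>?J. tdelta (a i * f j, w i) p - tdelta (f j, \<lambda>t. a i * w i t) p) \<in> tens_rel K D"
      by (rule t_sum) (rule tens_rel.balanced[OF wJ aK])
    have T4: "(\<lambda>p. \<Sum>i\<in>?J. tdelta (f i + a i * f j, w i) p - tdelta (f i, w i) p - tdelta (a i * f j, w i) p) \<in> tens_rel K D"
      by (rule t_sum) (rule tens_rel.add_left[OF wJ])
    have all: "(\<lambda>p. ((tdelta (f j, w j) p - tdelta (f j, om) p) + 
        (tdelta (f j, om) p - (\<Sum>i\<in>?J. tdelta (f j, \<lambda>t. a i * w i t) p))) -
        (\<Sum>i\<in>?J. tdelta (a i * f j, w i) p - tdelta (f j, \<lambda>t. a i * w i t) p) -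
        (\<Sum>i\<in>?J. tdelta (f i + a i * f j, w i) p - tdelta (f i, w i) p - tdelta (a i * f j, w i) p)
        + tsum ?J f' w p) \<in> tens_rel K D"
      by (intro t_add t_diff T1 T2 T3 T4 IH)
    show ?thesis
    proof (rule t_cong[OF all])
      fix p
      show "tdelta (f j, w j) p - tdelta (f j, om) p +
         (tdelta (f j, om) p - (\<Sum>i\<in>?J. tdelta (f j, \<lambda>t. a i * w i t) p)) -
         (\<Sum>i\<in>?J. tdelta (a i * f j, w i) p - tdelta (f j, \<lambda>t. a i * w i t) p) -
         (\<Sum>i\<in>?J. tdelta (f i + a i * f j, w i) p - tdelta (f i, w i) p - tdelta (a i * f j, w i) p) +
         tsum ?J f' w p = tsum I f w p"
        unfolding tsum_def f'_def using less.prems(1) j(1)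
        by (simp add: sum_subtractf sum.remove)
    qed
  qed
qed

lemma tmult_nat: "\<omega> \<in> kerD1 D K \<Longrightarrow>
  (\<lambda>q. int m * tdelta (g, \<omega>) q - tdelta (of_nat m * g, \<omega>) q) \<in> tens_rel K D"
proof (induction m)
  case 0
  then show ?case using t_neg[OF t_zero_left[OF 0]] by simp
next
  case (Suc m)
  have a: "(\<lambda>p. tdelta (of_nat m * g + g, \<omega>) p - tdelta (of_nat m * g, \<omega>) p - tdelta (g, \<omega>) p) \<in> tens_rel K D"
    by (rule tens_rel.add_left[OF Suc.prems])
  show ?case
    by (rule t_cong[OF t_diff[OF Suc.IH[OF Suc.prems] a]]) (simp add: algebra_simps)
qed

lemma tmult: "\<omega> \<in> kerD1 D K \<Longrightarrow>
  (\<lambda>q. n * tdelta (g, \<omega>) q - tdelta (of_int n * g, \<omega>) q) \<in> tens_rel K D"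
proof (cases "n \<ge> 0")
  case True
  assume w: "\<omega> \<in> kerD1 D K"
  obtain m where "n = int m" using True nonneg_int_cases by blast
  then show ?thesis using tmult_nat[OF w, of m g] by simp
next
  case False
  assume w: "\<omega> \<in> kerD1 D K"
  obtain m where m: "n = - int m" using False by (metis le_cases neg_0_le_iff_le of_nat_0_le_iff int_cases2)
  have a: "(\<lambda>p. tdelta (of_nat m * g + - (of_nat m * g), \<omega>) p - tdelta (of_nat m * g, \<omega>) p - tdelta (- (of_nat m * g), \<omega>) p) \<in> tens_rel K D"
    by (rule tens_rel.add_left[OF w])
  have b: "(\<lambda>q. - (int m * tdelta (g, \<omega>) q - tdelta (of_nat m * g, \<omega>) q)) \<in> tens_rel K D"
    by (rule t_neg[OF tmult_nat[OF w]])
  show ?thesis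
    by (rule t_cong[OF t_add[OF t_diff[OF b t_zero_left[OF w]] a]]) (simp add: m)
qed

end

theorem lemma3p7:
  fixes K :: "'a::field set" and D :: "'a \<Rightarrow> 'a"
  assumes D_add: "\<And>a b. D (a + b) = D a + D b"
    and D_mult: "\<And>a b. D (a * b) = a * D b + D a * b"
    and ker_D: "{x. D x = 0} = K"
  shows "\<forall>\<xi> \<eta>. tensor_elem K D \<xi> \<and> tensor_elem K D \<eta> \<and> omega_eq K (mult_map \<xi>) (mult_map \<eta>)
           \<longrightarrow> (\<lambda>p. \<xi> p - \<eta> p) \<in> tens_rel K D"
proof (intro allI impI, elim conjE)
  interpret der K D using assms by unfold_locales auto
  fix \<xi> \<eta>
  assume tx: "tensor_elem K D \<xi>" and ty: "tensor_elem K D \<eta>"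
    and oe: "omega_eq K (mult_map \<xi>) (mult_map \<eta>)"
  define S where "S = {p. \<xi> p \<noteq> 0} \<union> {p. \<eta> p \<noteq> 0}"
  have fS: "finite S" using tx ty by (simp add: S_def tensor_elem_def)
  have wS: "\<And>p. p \<in> S \<Longrightarrow> snd p \<in> kerD1 D K" using tx ty by (auto simp: S_def tensor_elem_def)
  define f where "f p = of_int (\<xi> p - \<eta> p) * fst p" for p
  have mm: "mult_map z t = (\<Sum>p\<in>S. of_int (z p) * fst p * snd p t)"
    if "{p. z p \<noteq> 0} \<subseteq> S" for z :: "'a \<times> ('a \<Rightarrow> 'a) \<Rightarrow> int" and t
    unfolding mult_map_def by (rule sum.mono_neutral_left) (use fS that in auto)
  have lin: "lin S f snd t = mult_map \<xi> t - mult_map \<eta> t" for t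
  proof -
    have "mult_map \<xi> t = (\<Sum>p\<in>S. of_int (\<xi> p) * fst p * snd p t)" by (rule mm) (auto simp: S_def)
    moreover have "mult_map \<eta> t = (\<Sum>p\<in>S. of_int (\<eta> p) * fst p * snd p t)" by (rule mm) (auto simp: S_def)
    ultimately show ?thesis unfolding lin_def f_def
      by (simp add: sum_subtractf[symmetric] algebra_simps)
  qed
  have lk: "lin S f snd \<in> kd_rel K"
    using oe unfolding omega_eq_def by (rule kd_cong) (simp add: lin)
  have T: "tsum S f snd \<in> tens_rel K D" by (rule mainlem[OF fS wS lk])
  have M: "(\<lambda>q. \<Sum>p\<in>S. (\<xi> p - \<eta> p) * tdelta (fst p, snd p) q - tdelta (f p, snd p) q) \<in> tens_rel K D"
  proof (rule t_sum)
    fix p assume "p \<in> S"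
    from tmult[OF wS[OF this], of "\<xi> p - \<eta> p" "fst p"]
    show "(\<lambda>q. (\<xi> p - \<eta> p) * tdelta (fst p, snd p) q - tdelta (f p, snd p) q) \<in> tens_rel K D"
      unfolding f_def .
  qed
  show "(\<lambda>p. \<xi> p - \<eta> p) \<in> tens_rel K D"
  proof (rule t_cong[OF t_add[OF M T]])
    fix q
    have "(\<Sum>p\<in>S. (\<xi> p - \<eta> p) * tdelta (fst p, snd p) q) = (\<Sum>p\<in>S. if q = p then \<xi> p - \<eta> p else 0)"
      by (rule sum.cong) (auto simp: tdelta_def)
    also have "\<dots> = \<xi> q - \<eta> q" using fS by (simp add: sum.delta' S_def)
    finally show "(\<Sum>p\<in>S. (\<xi> p - \<eta> p) * tdelta (fst p, snd p) q - tdelta (f p, snd p) q) + tsum S f snd q = \<xi> q - \<eta> q"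
      unfolding tsum_def by (simp add: sum_subtractf)
  qed
qed

end
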